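(* Let $\mathbf A\in\mathbb C^{m\times n}$, $\mathbf y\in\mathbb C^{1\times n}$, consider the system $\mathbf x\mathbf A=\mathbf y$ with unknown row vector $\mathbf x\in\mathbb C^{1\times m}$, and let $\mathbf x^{0}=\mathbf y\mathbf A^{+}=(x^{0}_1,\dots,x^{0}_m)$. Put $\mathbf g=\mathbf y\mathbf A^{*}$. (i) If $\operatorname{rank}\mathbf A=m$, then for all $i=1,\dots,m$, $x^{0}_i=\dfrac{\det\left((\mathbf A\mathbf A^{*})_{i.}(\mathbf g)\right)}{\det(\mathbf A\mathbf A^{*})}$. (ii) If $\operatorname{rank}\mathbf A=r\le n<m$, then for all $i=1,\dots,m$, $x^{0}_i=\dfrac{\sum_{\alpha\in I_{r,m}\{i\}}\left|\left((\mathbf A\mathbf A^{*})_{i.}(\mathbf g)\right)^{\alpha}_{\alpha}\right|}{d_r(\mathbf A\mathbf A^{*})}$.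
   Context: $\mathbf A^{+}$ is the Moore–Penrose inverse: the unique $\mathbf X$ with $\mathbf A\mathbf X\mathbf A=\mathbf A$, $\mathbf X\mathbf A\mathbf X=\mathbf X$, $(\mathbf A\mathbf X)^{*}=\mathbf A\mathbf X$, $(\mathbf X\mathbf A)^{*}=\mathbf X\mathbf A$. For a square matrix $\mathbf M$, $\mathbf M_{i.}(\mathbf c)$ is obtained from $\mathbf M$ by replacing its $i$-th row by the row vector $\mathbf c$. $I_{r,m}$ is the set of strictly increasing sequences of $r$ elements of $\{1,\dots,m\}$, $I_{r,m}\{i\}=\{\alpha\in I_{r,m}:i\in\alpha\}$, $\mathbf M^{\alpha}_{\alpha}$ is the principal submatrix indexed by $\alpha$, $|\cdot|$ is the determinant, and $d_r(\mathbf M)=\sum_{\alpha\in I_{r,m}}|\mathbf M^{\alpha}_{\alpha}|$ is the sum of principal minors of order $r$. *)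

theory Defs
  imports "Jordan_Normal_Form.DL_Rank" "Jordan_Normal_Form.DL_Submatrix"
begin

definition cadj :: "complex mat \<Rightarrow> complex mat" where
  "cadj A = mat (dim_col A) (dim_row A) (\<lambda>(i,j). cnj (A $$ (j,i)))"

definition mp_inverse :: "complex mat \<Rightarrow> complex mat" where
  "mp_inverse A = (THE X. X \<in> carrier_mat (dim_col A) (dim_row A) \<and>
      A * X * A = A \<and> X * A * X = X \<and>
      cadj (A * X) = A * X \<and> cadj (X * A) = X * A)"

definition replace_row :: "'a mat \<Rightarrow> nat \<Rightarrow> 'a vec \<Rightarrow> 'a mat" where
  "replace_row M i c = mat (dim_row M) (dim_col M)
     (\<lambda>(k,l). if k = i then c $ l else M $$ (k,l))"

text \<open>I_{r,m}: r-element subsets of the (0-based) index set {0..<m}.\<close>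
definition index_sets :: "nat \<Rightarrow> nat \<Rightarrow> nat set set" where
  "index_sets r m = {\<alpha>. \<alpha> \<subseteq> {..<m} \<and> card \<alpha> = r}"

definition principal_minor :: "'a::comm_ring_1 mat \<Rightarrow> nat set \<Rightarrow> 'a" where
  "principal_minor M \<alpha> = det (submatrix M \<alpha> \<alpha>)"

definition dr :: "nat \<Rightarrow> 'a::comm_ring_1 mat \<Rightarrow> 'a" where
  "dr r M = (\<Sum>\<alpha>\<in>index_sets r (dim_row M). principal_minor M \<alpha>)"

definition crank :: "complex mat \<Rightarrow> nat" where
  "crank A = vec_space.rank (dim_row A) A"

end

theory Submission
  imports Defs
begin

lemma cadj_carrier[simp]: "A \<in> carrier_mat m n \<Longrightarrow> cadj A \<in> carrier_mat n m"
  unfolding cadj_def by auto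

lemma cadj_dim[simp]: "dim_row (cadj A) = dim_col A" "dim_col (cadj A) = dim_row A"
  unfolding cadj_def by auto

lemma cadj_index[simp]: "i < dim_col A \<Longrightarrow> j < dim_row A \<Longrightarrow> cadj A $$ (i,j) = cnj (A $$ (j,i))"
  unfolding cadj_def by auto

lemma cadj_cadj[simp]: "cadj (cadj A) = A"
  by (rule eq_matI) auto

lemma cadj_mult: assumes "A \<in> carrier_mat m n" "B \<in> carrier_mat n p"
  shows "cadj (A * B) = cadj B * cadj A"
proof (rule eq_matI)
  fix i j assume "i < dim_row (cadj B * cadj A)" "j < dim_col (cadj B * cadj A)"
  thus "cadj (A * B) $$ (i, j) = (cadj B * cadj A) $$ (i, j)"
    using assms by (auto simp: scalar_prod_def row_def col_def intro!: sum.cong)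
qed (use assms in auto)

lemma cadj_one[simp]: "cadj (1\<^sub>m n) = 1\<^sub>m n"
  by (rule eq_matI) auto

lemma cadj_mult_zero:
  fixes C :: "complex mat"
  assumes C: "C \<in> carrier_mat p q" and v: "v \<in> carrier_vec q"
    and z: "cadj C * C *\<^sub>v v = 0\<^sub>v q"
  shows "C *\<^sub>v v = 0\<^sub>v p"
proof -
  define w where "w = C *\<^sub>v v"
  have w: "w \<in> carrier_vec p" unfolding w_def using mult_mat_vec_carrier[OF C v] .
  have "cadj C * C *\<^sub>v v = cadj C *\<^sub>v w" unfolding w_def
    by (rule assoc_mult_mat_vec[OF cadj_carrier[OF C] C v])
  hence z': "cadj C *\<^sub>v w = 0\<^sub>v q" using z by simp
  have "(\<Sum>k<p. cnj (w $ k) * w $ k) = (\<Sum>k<p. cnj (\<Sum>j<q. C $$ (k,j) * v $ j) * w $ k)"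
    unfolding w_def using C v by (auto simp: scalar_prod_def row_def intro!: sum.cong)
  also have "\<dots> = (\<Sum>k<p. \<Sum>j<q. cnj (v $ j) * (cnj (C $$ (k,j)) * w $ k))"
    by (simp add: sum_distrib_left sum_distrib_right algebra_simps)
  also have "\<dots> = (\<Sum>j<q. cnj (v $ j) * (\<Sum>k<p. cnj (C $$ (k,j)) * w $ k))"
    by (subst sum.swap) (simp add: sum_distrib_left)
  also have "\<dots> = (\<Sum>j<q. cnj (v $ j) * (cadj C *\<^sub>v w) $ j)"
    using C w by (auto simp: scalar_prod_def row_def intro!: sum.cong)
  also have "\<dots> = 0" using z' by simp
  finally have s: "(\<Sum>k<p. cnj (w $ k) * w $ k) = 0" .
  have eqr: "(\<Sum>k<p. cnj (w $ k) * w $ k) = of_real (\<Sum>k<p. (cmod (w $ k))\<^sup>2)"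
  proof -
    have "\<And>k. cnj (w $ k) * w $ k = of_real ((cmod (w $ k))\<^sup>2)"
      by (metis complex_norm_square mult.commute)
    thus ?thesis by (simp only: of_real_sum)
  qed
  have "complex_of_real (\<Sum>k<p. (cmod (w $ k))\<^sup>2) = 0" using s eqr by metis
  hence "(\<Sum>k<p. (cmod (w $ k))\<^sup>2) = 0" by (simp only: of_real_eq_0_iff)
  hence "\<forall>k\<in>{..<p}. (cmod (w $ k))\<^sup>2 = 0"
    by (subst sum_nonneg_eq_0_iff[symmetric]) auto
  hence "\<forall>k<p. w $ k = 0" by auto
  thus ?thesis using w unfolding w_def[symmetric] by (intro eq_vecI) auto
qed

lemma gram_det_nonzero:
  fixes C :: "complex mat"
  assumes C: "C \<in> carrier_mat p q"
    and inj: "\<And>v. v \<in> carrier_vec q \<Longrightarrow> C *\<^sub>v v = 0\<^sub>v p \<Longrightarrow> v = 0\<^sub>v q"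
  shows "det (cadj C * C) \<noteq> 0"
proof
  assume d0: "det (cadj C * C) = 0"
  have Cq: "cadj C * C \<in> carrier_mat q q" using C by auto
  have "\<exists>v. v \<in> carrier_vec q \<and> v \<noteq> 0\<^sub>v q \<and> cadj C * C *\<^sub>v v = 0\<^sub>v q"
    using det_0_iff_vec_prod_zero_field[OF Cq] d0 by simp
  then obtain v where v: "v \<in> carrier_vec q" "v \<noteq> 0\<^sub>v q" "cadj C * C *\<^sub>v v = 0\<^sub>v q"
    by blast
  thus False using cadj_mult_zero[OF C] inj by blast
qed

lemma inverse_exists:
  fixes M :: "complex mat"
  assumes M: "M \<in> carrier_mat n n" and d: "det M \<noteq> 0"
  obtains N where "N \<in> carrier_mat n n" "M * N = 1\<^sub>m n" "N * M = 1\<^sub>m n"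
  using det_non_zero_imp_unit[OF M d] unfolding Units_def ring_mat_def by auto

lemma herm_inverse:
  fixes M :: "complex mat"
  assumes M: "M \<in> carrier_mat n n" and h: "cadj M = M"
    and N: "N \<in> carrier_mat n n" "M * N = 1\<^sub>m n" "N * M = 1\<^sub>m n"
  shows "cadj N = N"
proof -
  have 1: "M * cadj N = 1\<^sub>m n"
    using cadj_mult[OF N(1) M] N h by simp
  have "cadj N = (N * M) * cadj N" using N by simp
  also have "\<dots> = N * (M * cadj N)" by (rule assoc_mult_mat[OF N(1) M cadj_carrier[OF N(1)]])
  also have "\<dots> = N" using 1 N by simp
  finally show ?thesis .
qed

lemma massoc: fixes A :: "'a::semiring_1 mat" shows "dim_col A = dim_row B \<Longrightarrow> dim_col B = dim_row C \<Longrightarrow> A * B * C = A * (B * C)"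
  by (rule assoc_mult_mat[of A "dim_row A" "dim_col A" B "dim_col B" C "dim_col C"]) auto

lemma one_l: fixes A :: "'a::semiring_1 mat" shows "dim_row A = n \<Longrightarrow> 1\<^sub>m n * A = A"
  by (rule left_mult_one_mat[of A n "dim_col A"]) auto

lemma one_r: fixes A :: "'a::semiring_1 mat" shows "dim_col A = n \<Longrightarrow> A * 1\<^sub>m n = A"
  by (rule right_mult_one_mat[of A "dim_row A" n]) auto

lemma cadj_mult': "dim_col A = dim_row B \<Longrightarrow> cadj (A * B) = cadj B * cadj A"
  by (rule cadj_mult[of A "dim_row A" "dim_col A" B "dim_col B"]) auto

definition penrose :: "complex mat \<Rightarrow> complex mat \<Rightarrow> bool" where
  "penrose A X \<longleftrightarrow> X \<in> carrier_mat (dim_col A) (dim_row A) \<and>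
      A * X * A = A \<and> X * A * X = X \<and> cadj (A * X) = A * X \<and> cadj (X * A) = X * A"

lemma penrose_unique:
  assumes A: "A \<in> carrier_mat m n" and X: "penrose A X" and Y: "penrose A Y"
  shows "X = Y"
proof -
  from X A have Xc: "X \<in> carrier_mat n m" and X1: "A * X * A = A" and X2: "X * A * X = X"
    and X3: "cadj (A * X) = A * X" and X4: "cadj (X * A) = X * A" unfolding penrose_def by auto
  from Y A have Yc: "Y \<in> carrier_mat n m" and Y1: "A * Y * A = A" and Y2: "Y * A * Y = Y"
    and Y3: "cadj (A * Y) = A * Y" and Y4: "cadj (Y * A) = Y * A" unfolding penrose_def by auto
  note d = carrier_matD[OF A] carrier_matD[OF Xc] carrier_matD[OF Yc]
  have h1: "X = X * (cadj X * cadj A)"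
  proof -
    have "X = X * (A * X)" using X2 d by (simp add: massoc)
    also have "\<dots> = X * cadj (A * X)" using X3 by simp
    also have "\<dots> = X * (cadj X * cadj A)" using d by (simp add: cadj_mult')
    finally show ?thesis .
  qed
  have h2: "cadj A = cadj A * (A * Y)"
  proof -
    have "cadj A = cadj (A * Y * A)" using Y1 by simp
    also have "\<dots> = cadj A * cadj (A * Y)" using d by (simp add: cadj_mult')
    finally show ?thesis using Y3 by simp
  qed
  have h3: "Y = cadj A * (cadj Y * Y)"
  proof -
    have "Y = cadj (Y * A) * Y" using Y2 Y4 by simp
    also have "\<dots> = cadj A * (cadj Y * Y)" using d by (simp add: cadj_mult' massoc)
    finally show ?thesis .
  qed
  have h4: "cadj A = X * (A * cadj A)"
  proof -
    have "cadj A = cadj (A * (X * A))" using X1 d by (simp add: massoc)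
    also have "\<dots> = cadj (X * A) * cadj A" using d by (simp add: cadj_mult')
    finally show ?thesis using X4 d by (simp add: massoc)
  qed
  have "X = X * (cadj X * (cadj A * (A * Y)))" using h1 h2 by simp
  also have "\<dots> = (X * (cadj X * cadj A)) * (A * Y)" using d by (simp add: massoc)
  also have "\<dots> = X * (A * Y)" using h1 by simp
  finally have eX: "X = X * (A * Y)" .
  have "Y = X * (A * cadj A) * (cadj Y * Y)" using h3 h4 by simp
  also have "\<dots> = X * (A * (cadj A * (cadj Y * Y)))" using d by (simp add: massoc)
  also have "\<dots> = X * (A * Y)" using h3 by simp
  finally show ?thesis using eX by simp
qed

lemma mp_inverse_eq:
  assumes A: "A \<in> carrier_mat m n" and X: "penrose A X"
  shows "mp_inverse A = X"
proof -
  have "(THE X. penrose A X) = X"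
    by (rule the_equality[where P="penrose A", OF X]) (use penrose_unique[OF A X] in auto)
  thus ?thesis unfolding mp_inverse_def penrose_def .
qed

lemma mp_factor:
  fixes A F G :: "complex mat"
  assumes A: "A \<in> carrier_mat m n" and F: "F \<in> carrier_mat m r" and G: "G \<in> carrier_mat r n"
    and AFG: "A = F * G"
    and P: "P \<in> carrier_mat r r" "G * cadj G * P = 1\<^sub>m r" "P * (G * cadj G) = 1\<^sub>m r" "cadj P = P"
    and Q: "Q \<in> carrier_mat r r" "Q * (cadj F * F) = 1\<^sub>m r" "cadj F * F * Q = 1\<^sub>m r" "cadj Q = Q"
  shows "mp_inverse A = cadj G * (P * (Q * cadj F))"
proof -
  note d = carrier_matD[OF A] carrier_matD[OF F] carrier_matD[OF G] carrier_matD[OF P(1)] carrier_matD[OF Q(1)]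
  define X where "X = cadj G * (P * (Q * cadj F))"
  have P2: "G * (cadj G * (P * Z)) = Z" if "dim_row Z = r" for Z
  proof -
    have "G * (cadj G * (P * Z)) = (G * cadj G * P) * Z" using d that by (simp add: massoc)
    thus ?thesis using P that by (simp add: one_l)
  qed
  have Q2: "Q * (cadj F * (F * Z)) = Z" if "dim_row Z = r" for Z
  proof -
    have "Q * (cadj F * (F * Z)) = (Q * (cadj F * F)) * Z" using d that by (simp add: massoc)
    thus ?thesis using Q that by (simp add: one_l)
  qed
  have AX: "A * X = F * (Q * cadj F)"
    unfolding AFG X_def using d by (simp add: massoc P2)
  have XA: "X * A = cadj G * (P * G)"
    unfolding AFG X_def using d by (simp add: massoc Q2)
  have pen: "penrose A X"
    unfolding penrose_def
  proof (intro conjI)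
    show "X \<in> carrier_mat (dim_col A) (dim_row A)" unfolding X_def using d by auto
    show "A * X * A = A" unfolding AX using d by (simp add: AFG massoc Q2)
    show "X * A * X = X" unfolding XA using d by (simp add: X_def massoc P2)
    show "cadj (A * X) = A * X" unfolding AX using d Q(4) by (simp add: cadj_mult' massoc)
    show "cadj (X * A) = X * A" unfolding XA using d P(4) by (simp add: cadj_mult' massoc)
  qed
  show ?thesis using mp_inverse_eq[OF A pen] X_def by simp
qed

lemma rank_factorization:
  fixes A :: "complex mat"
  assumes A: "A \<in> carrier_mat m n"
  shows "\<exists>F G. F \<in> carrier_mat m (crank A) \<and> G \<in> carrier_mat (crank A) n \<and> A = F * G
     \<and> det (cadj F * F) \<noteq> 0 \<and> det (G * cadj G) \<noteq> 0 \<and> crank A \<le> m"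
proof -
  interpret V: vec_space "TYPE(complex)" m .
  have cA: "crank A = V.rank A" unfolding crank_def using A by simp
  have colsA: "set (cols A) \<subseteq> carrier_vec m" using A cols_dim by blast
  have P0: "{} \<subseteq> set (cols A) \<and> V.lin_indpt {}"
    by (metis (no_types) empty_subsetI V.fin_dim V.finite_basis_exists V.subset_li_is_li vec_vs vectorspace.basis_def)
  obtain S where max: "maximal S (\<lambda>T. T \<subseteq> set (cols A) \<and> V.lin_indpt T)" and finS: "finite S"
    using maximal_exists_superset[of "set (cols A)" "(\<lambda>T. T \<subseteq> set (cols A) \<and> V.lin_indpt T)" "{}"] P0
    by blast
  have SA: "S \<subseteq> set (cols A)" and liS: "V.lin_indpt S" using max unfolding maximal_def by auto
  have Sc: "S \<subseteq> carrier_vec m" using SA colsA by auto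
  have rS: "crank A = card S" unfolding cA using V.rank_card_indpt[OF A max] .
  define r where "r = card S"
  obtain xs where xs: "set xs = S" "distinct xs" using finite_distinct_list[OF finS] by blast
  have lxs: "length xs = r" unfolding r_def using xs distinct_card by fastforce
  define F where "F = mat_of_cols m xs"
  have F: "F \<in> carrier_mat m r" unfolding F_def using lxs by auto
  have colsF: "cols F = xs" unfolding F_def using xs Sc by (intro cols_mat_of_cols) auto
  have Finj: "v = 0\<^sub>v r" if v: "v \<in> carrier_vec r" and Fv: "F *\<^sub>v v = 0\<^sub>v m" for v
  proof (rule ccontr)
    assume "v \<noteq> 0\<^sub>v r"
    from V.lin_depI[OF F v this Fv] colsF xs liS show False by simp
  qed
  have inspan: "c \<in> V.span S" if c: "c \<in> set (cols A)" for c
  proof (rule ccontr)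
    assume ns: "c \<notin> V.span S"
    have cc: "c \<in> carrier_vec m" using c colsA by auto
    have "c \<notin> S" using ns V.in_own_span[OF Sc] by auto
    hence "V.lin_indpt (S \<union> {c})" using V.lin_dep_iff_in_span[OF Sc liS cc] ns by simp
    hence "S \<union> {c} = S" using max c SA unfolding maximal_def by blast
    thus False using \<open>c \<notin> S\<close> by auto
  qed
  have colrep: "\<exists>v. v \<in> carrier_vec r \<and> col A j = F *\<^sub>v v" if j: "j < n" for j
  proof -
    have "col A j \<in> set (cols A)" using j A by (simp add: cols_def)
    hence "col A j \<in> V.span (set xs)" using inspan xs by simp
    hence "col A j \<in> V.span_list xs" using V.span_list_as_span[of xs] xs Sc by simp
    then obtain f where f: "col A j = V.lincomb_list f xs"
      unfolding V.span_list_def by auto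
    have "V.lincomb_list f xs = F *\<^sub>v vec (length xs) f"
      unfolding F_def by (rule V.lincomb_list_as_mat_mult) (use xs Sc in auto)
    thus ?thesis using f lxs by (intro exI[of _ "vec (length xs) f"]) auto
  qed
  define vj where "vj = (\<lambda>j. SOME v. v \<in> carrier_vec r \<and> col A j = F *\<^sub>v v)"
  have vj: "vj j \<in> carrier_vec r" "col A j = F *\<^sub>v vj j" if "j < n" for j
    using someI_ex[OF colrep[OF that]] unfolding vj_def by auto
  define G where "G = mat r n (\<lambda>(i,j). vj j $ i)"
  have G: "G \<in> carrier_mat r n" unfolding G_def by auto
  have colG: "col G j = vj j" if "j < n" for j
    using vj[OF that] that unfolding G_def by (intro eq_vecI) auto
  have AFG: "A = F * G"
  proof (rule eq_matI)
    fix i j assume i: "i < dim_row (F * G)" and j: "j < dim_col (F * G)"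
    hence i': "i < m" and j': "j < n" using F G by auto
    have "(F * G) $$ (i, j) = (F *\<^sub>v col G j) $ i" using F G i' j' by simp
    also have "\<dots> = col A j $ i" using vj[OF j'] colG[OF j'] by simp
    also have "\<dots> = A $$ (i,j)" using A i' j' by simp
    finally show "A $$ (i, j) = (F * G) $$ (i, j)" by simp
  qed (use A F G in auto)
  have unitcol: "\<exists>j<n. col G j = unit_vec r k" if k: "k < r" for k
  proof -
    have "xs ! k \<in> S" using k lxs xs by auto
    hence "xs ! k \<in> set (cols A)" using SA by auto
    then obtain j where j: "j < n" "col A j = xs ! k" using A by (auto simp: cols_def)
    have "col F k = xs ! k" using colsF k F by (metis carrier_matD(2) cols_nth)
    have eFk: "F *\<^sub>v unit_vec r k = col F k" using F k by (intro eq_vecI) (auto simp: scalar_prod_right_unit)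
    have "F *\<^sub>v (vj j - unit_vec r k) = F *\<^sub>v vj j - F *\<^sub>v unit_vec r k"
      using F vj(1)[OF j(1)] by (simp add: mult_minus_distrib_mat_vec)
    also have "\<dots> = 0\<^sub>v m" using vj(2)[OF j(1)] j eFk \<open>col F k = xs ! k\<close> F by auto
    finally have eq0: "vj j - unit_vec r k = 0\<^sub>v r" using Finj vj(1)[OF j(1)] by auto
    have "vj j = unit_vec r k"
    proof (rule eq_vecI)
      fix i assume "i < dim_vec (unit_vec r k)"
      hence i: "i < r" by simp
      have "(vj j - unit_vec r k) $ i = 0" using eq0 i by simp
      thus "vj j $ i = unit_vec r k $ i" using i vj(1)[OF j(1)] by simp
    qed (use vj(1)[OF j(1)] in simp)
    thus ?thesis using j colG by auto
  qed
  have dF: "det (cadj F * F) \<noteq> 0" using gram_det_nonzero[OF F] Finj by blast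
  have dG: "det (G * cadj G) \<noteq> 0"
  proof -
    have "det (cadj (cadj G) * cadj G) \<noteq> 0"
    proof (rule gram_det_nonzero[OF cadj_carrier[OF G]])
      fix w :: "complex vec" assume w: "w \<in> carrier_vec r" and z: "cadj G *\<^sub>v w = 0\<^sub>v n"
      show "w = 0\<^sub>v r"
      proof (rule eq_vecI)
        fix k assume "k < dim_vec (0\<^sub>v r)"
        hence k: "k < r" by simp
        obtain j where j: "j < n" "col G j = unit_vec r k" using unitcol[OF k] by auto
        have "(cadj G *\<^sub>v w) $ j = (\<Sum>i<r. cnj (G $$ (i, j)) * w $ i)"
          using G w j by (simp add: scalar_prod_def row_def lessThan_atLeast0)
        also have "\<dots> = (\<Sum>i<r. (if i = k then 1 else 0) * w $ i)"
        proof (rule sum.cong)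
          fix i assume "i \<in> {..<r}"
          hence "G $$ (i, j) = col G j $ i" using G j(1) by simp
          thus "cnj (G $$ (i, j)) * w $ i = (if i = k then 1 else 0) * w $ i"
            using j \<open>i \<in> {..<r}\<close> k by auto
        qed simp
        also have "\<dots> = (\<Sum>i<r. if i = k then w $ i else 0)" by (intro sum.cong) auto
        also have "\<dots> = w $ k" using k by simp
        finally show "w $ k = 0\<^sub>v r $ k" using z j k by simp
      qed (use w in auto)
    qed
    thus ?thesis by simp
  qed
  have rm: "r \<le> m"
  proof -
    have "V.lin_indpt S" by fact
    from V.li_le_dim(2)[OF V.fin_dim Sc this] V.dim_is_n show ?thesis unfolding r_def by simp
  qed
  show ?thesis using F G AFG dF dG rm rS unfolding r_def by metis
qed

section \<open>Row replacement and linearity\<close>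

lemma replace_row_carrier[simp]: "M \<in> carrier_mat n n \<Longrightarrow> replace_row M i w \<in> carrier_mat n n"
  unfolding replace_row_def by auto

lemma replace_row_index[simp]: "k < dim_row M \<Longrightarrow> l < dim_col M \<Longrightarrow>
  replace_row M i w $$ (k,l) = (if k = i then w $ l else M $$ (k,l))"
  "dim_row (replace_row M i w) = dim_row M" "dim_col (replace_row M i w) = dim_col M"
  unfolding replace_row_def by auto

lemma mat_delete_replace_row:
  assumes M: "M \<in> carrier_mat n n"
  shows "mat_delete (replace_row M i w) i j = mat_delete M i j"
  by (rule eq_matI) (use M in \<open>auto simp: mat_delete_def replace_row_def\<close>)

lemma det_replace_row:
  fixes M :: "'a::comm_ring_1 mat"
  assumes M: "M \<in> carrier_mat n n" and i: "i < n" and w: "w \<in> carrier_vec n"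
  shows "det (replace_row M i w) = (\<Sum>j<n. w $ j * cofactor M i j)"
proof -
  have "det (replace_row M i w) = (\<Sum>j<n. replace_row M i w $$ (i,j) * cofactor (replace_row M i w) i j)"
    by (rule laplace_expansion_row[OF replace_row_carrier[OF M] i])
  also have "\<dots> = (\<Sum>j<n. w $ j * cofactor M i j)"
    by (rule sum.cong) (use M i in \<open>auto simp: cofactor_def mat_delete_replace_row\<close>)
  finally show ?thesis .
qed

lemma det_replace_row_lin:
  fixes M :: "'a::comm_ring_1 mat"
  assumes M: "M \<in> carrier_mat n n" and i: "i < n" and a: "a \<in> carrier_vec n" and b: "b \<in> carrier_vec n"
  shows "det (replace_row M i (a + c \<cdot>\<^sub>v b)) = det (replace_row M i a) + c * det (replace_row M i b)"
proof -
  have ab: "a + c \<cdot>\<^sub>v b \<in> carrier_vec n" using a b by auto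
  show ?thesis
    unfolding det_replace_row[OF M i ab] det_replace_row[OF M i a] det_replace_row[OF M i b]
    using a b by (simp add: sum.distrib sum_distrib_left algebra_simps)
qed

lemma replace_row_self:
  assumes M: "M \<in> carrier_mat n n" shows "replace_row M i (row M i) = M"
  by (rule eq_matI) (use M in \<open>auto simp: replace_row_def\<close>)

lemma det_replace_row_row:
  fixes M :: "'a::comm_ring_1 mat"
  assumes M: "M \<in> carrier_mat n n" and i: "i < n" and k: "k < n"
  shows "det (replace_row M i (row M k)) = (if k = i then det M else 0)"
proof (cases "k = i")
  case True thus ?thesis using replace_row_self[OF M] by simp
next
  case False
  have "det (replace_row M i (row M k)) = 0"
  proof (rule det_identical_rows[OF replace_row_carrier[OF M] _ i k])
    show "i \<noteq> k" using False by simp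
    show "row (replace_row M i (row M k)) i = row (replace_row M i (row M k)) k"
      by (rule eq_vecI) (use M i k False in \<open>auto simp: replace_row_def\<close>)
  qed
  thus ?thesis using False by simp
qed

lemma det_replace_row_comb:
  fixes M :: "'a::comm_ring_1 mat"
  assumes M: "M \<in> carrier_mat n n" and i: "i < n" and x: "x \<in> carrier_vec n"
  shows "det (replace_row M i (transpose_mat M *\<^sub>v x)) = x $ i * det M"
proof -
  have tx: "transpose_mat M *\<^sub>v x \<in> carrier_vec n" using M x by auto
  have "det (replace_row M i (transpose_mat M *\<^sub>v x)) = (\<Sum>j<n. (\<Sum>k<n. M $$ (k,j) * x $ k) * cofactor M i j)"
    unfolding det_replace_row[OF M i tx]
    by (rule sum.cong) (use M x in \<open>auto simp: scalar_prod_def lessThan_atLeast0 intro!: sum.cong\<close>)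
  also have "\<dots> = (\<Sum>j<n. \<Sum>k<n. x $ k * (M $$ (k,j) * cofactor M i j))"
    by (rule sum.cong[OF refl]) (simp add: sum_distrib_right sum_distrib_left mult_ac)
  also have "\<dots> = (\<Sum>k<n. \<Sum>j<n. x $ k * (M $$ (k,j) * cofactor M i j))"
    by (rule sum.swap)
  also have "\<dots> = (\<Sum>k<n. x $ k * (\<Sum>j<n. row M k $ j * cofactor M i j))"
    by (rule sum.cong[OF refl]) (use M in \<open>auto simp: sum_distrib_left intro!: sum.cong\<close>)
  also have "\<dots> = (\<Sum>k<n. x $ k * det (replace_row M i (row M k)))"
    by (rule sum.cong) (use M i in \<open>auto simp: det_replace_row\<close>)
  also have "\<dots> = (\<Sum>k<n. if k = i then x $ i * det M else 0)"
    by (rule sum.cong) (use M i in \<open>auto simp: det_replace_row_row\<close>)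
  also have "\<dots> = x $ i * det M" using i by simp
  finally show ?thesis .
qed

section \<open>Principal minors via unit rows\<close>

definition rs :: "'a::comm_ring_1 mat \<Rightarrow> nat set \<Rightarrow> 'a mat" where
  "rs M S = mat (dim_row M) (dim_row M) (\<lambda>(k,l). if k \<in> S then M $$ (k,l) else if k = l then 1 else 0)"

lemma pick_lessThan: "i < n \<Longrightarrow> pick {..<n} i = i"
proof -
  assume i: "i < n"
  have "card {a \<in> {..<n}. a < i} = i"
  proof -
    have "{a \<in> {..<n}. a < i} = {..<i}" using i by auto
    thus ?thesis by simp
  qed
  thus ?thesis using pick_card_in_set[of i "{..<n}"] i by simp
qed

lemma pick_image:
  assumes f: "strict_mono (f :: nat \<Rightarrow> nat)" and a: "a < card S"
  shows "pick (f ` S) a = f (pick S a)"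
proof -
  define x where "x = pick S a"
  have xS: "x \<in> S" unfolding x_def by (rule pick_in_set_le[OF a])
  have cx: "card {c \<in> S. c < x} = a" unfolding x_def by (rule card_pick_le[OF a])
  have "{b \<in> f ` S. b < f x} = f ` {c \<in> S. c < x}"
    using strict_mono_less[OF f] by auto
  hence "card {b \<in> f ` S. b < f x} = card {c \<in> S. c < x}"
    using card_image[OF strict_mono_imp_inj_on[OF f, of "{c \<in> S. c < x}"]] by simp
  hence "card {b \<in> f ` S. b < f x} = a" using cx by simp
  moreover have "pick (f ` S) (card {b \<in> f ` S. b < f x}) = f x"
    by (rule pick_card_in_set) (use xS in auto)
  ultimately show ?thesis unfolding x_def by simp
qed

lemma strict_mono_insert_index: "strict_mono (insert_index t)"
  by (rule strict_monoI) (auto simp: insert_index_def)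

lemma submatrix_full:
  assumes M: "M \<in> carrier_mat n n"
  shows "submatrix M {..<n} {..<n} = M"
proof -
  have c: "card {i. i < n \<and> i \<in> {..<n}} = n" by simp
  show ?thesis
    by (rule eq_matI) (use M c in \<open>auto simp: submatrix_def pick_lessThan\<close>)
qed

lemma rs_full: assumes M: "M \<in> carrier_mat n n" shows "rs M {..<n} = M"
  by (rule eq_matI) (use M in \<open>auto simp: rs_def\<close>)

lemma det_submatrix_rs:
  fixes M :: "'a::comm_ring_1 mat"
  assumes "M \<in> carrier_mat n n" and "S \<subseteq> {..<n}"
  shows "det (submatrix M S S) = det (rs M S)"
  using assms
proof (induction n arbitrary: M S)
  case 0
  hence S: "S = {}" by auto
  have "submatrix M S S \<in> carrier_mat 0 0" using 0 S by (auto simp: submatrix_def)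
  moreover have "rs M S \<in> carrier_mat 0 0" using 0 by (auto simp: rs_def)
  ultimately show ?case by simp
next
  case (Suc n)
  note M = Suc.prems(1) and S = Suc.prems(2)
  show ?case
  proof (cases "S = {..<Suc n}")
    case True
    thus ?thesis using submatrix_full[OF M] rs_full[OF M] by simp
  next
    case False
    then obtain t where t: "t < Suc n" "t \<notin> S" using S by auto
    define S' where "S' = {k. k < n \<and> insert_index t k \<in> S}"
    have S'n: "S' \<subseteq> {..<n}" unfolding S'_def by auto
    have rsc: "rs M S \<in> carrier_mat (Suc n) (Suc n)" using M by (auto simp: rs_def)
    have "det (rs M S) = (\<Sum>j<Suc n. rs M S $$ (t,j) * cofactor (rs M S) t j)"
      by (rule laplace_expansion_row[OF rsc t(1)])
    also have "\<dots> = (\<Sum>j<Suc n. if j = t then cofactor (rs M S) t t else 0)"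
      by (rule sum.cong) (use M t in \<open>auto simp: rs_def\<close>)
    also have "\<dots> = cofactor (rs M S) t t" using t by simp
    also have "\<dots> = det (mat_delete (rs M S) t t)" unfolding cofactor_def
      by (simp add: mult_2[symmetric])
    also have "mat_delete (rs M S) t t = rs (mat_delete M t t) S'"
      by (rule eq_matI) (use M t in \<open>auto simp: rs_def mat_delete_def S'_def insert_index_def\<close>)
    finally have e1: "det (rs M S) = det (rs (mat_delete M t t) S')" .
    have SS': "S = insert_index t ` S'"
    proof
      show "insert_index t ` S' \<subseteq> S" unfolding S'_def by auto
      show "S \<subseteq> insert_index t ` S'"
      proof
        fix s assume s: "s \<in> S"
        hence sn: "s < Suc n" "s \<noteq> t" using S t by auto
        have "insert_index t (delete_index t s) = s"
          using sn by (auto simp: insert_index_def delete_index_def)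
        moreover have "delete_index t s < n" using sn t(1) by (auto simp: delete_index_def)
        ultimately show "s \<in> insert_index t ` S'" unfolding S'_def using s by (metis (mono_tags) image_eqI mem_Collect_eq)
      qed
    qed
    have injS': "inj_on (insert_index t) S'"
      using strict_mono_imp_inj_on[OF strict_mono_insert_index] inj_on_subset by blast
    have cardS: "card S = card S'" unfolding SS' using card_image[OF injS'] .
    have Md: "mat_delete M t t \<in> carrier_mat n n" using mat_delete_carrier[OF M] by simp
    have c1: "card {i. i < Suc n \<and> i \<in> S} = card S"
      using S by (metis (no_types, lifting) Collect_cong lessThan_iff subsetD Collect_mem_eq)
    have c2: "card {i. i < n \<and> i \<in> S'} = card S'"
      using S'n by (metis (no_types, lifting) Collect_cong lessThan_iff subsetD Collect_mem_eq)
    have e2: "submatrix M S S = submatrix (mat_delete M t t) S' S'"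
    proof (rule eq_matI)
      show dr: "dim_row (submatrix M S S) = dim_row (submatrix (mat_delete M t t) S' S')"
        using M Md c1 c2 cardS by (simp add: dim_submatrix)
      show "dim_col (submatrix M S S) = dim_col (submatrix (mat_delete M t t) S' S')"
        using M Md c1 c2 cardS by (simp add: dim_submatrix)
      fix a b assume a: "a < dim_row (submatrix (mat_delete M t t) S' S')"
        and b: "b < dim_col (submatrix (mat_delete M t t) S' S')"
      hence a': "a < card S'" and b': "b < card S'" using Md c2 by (auto simp: dim_submatrix)
      have pa: "pick S' a < n" "pick S' b < n" using pick_in_set_le[OF a'] pick_in_set_le[OF b'] S'n by auto
      have "submatrix (mat_delete M t t) S' S' $$ (a,b) = mat_delete M t t $$ (pick S' a, pick S' b)"
        by (rule submatrix_index) (use Md c2 a' b' in auto)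
      also have "\<dots> = M $$ (insert_index t (pick S' a), insert_index t (pick S' b))"
        using pa M by (simp add: mat_delete_def insert_index_def)
      also have "\<dots> = M $$ (pick S a, pick S b)"
        unfolding SS' using pick_image[OF strict_mono_insert_index a'] pick_image[OF strict_mono_insert_index b'] by simp
      also have "\<dots> = submatrix M S S $$ (a,b)"
        by (rule submatrix_index[symmetric]) (use M c1 cardS a' b' in auto)
      finally show "submatrix M S S $$ (a, b) = submatrix (mat_delete M t t) S' S' $$ (a, b)" by simp
    qed
    show ?thesis unfolding e1 e2 by (rule Suc.IH[OF Md S'n])
  qed
qed

definition diagT :: "nat \<Rightarrow> nat set \<Rightarrow> 'a::comm_ring_1 mat" where
  "diagT n T = mat n n (\<lambda>(k,l). if k = l \<and> k \<in> T then 1 else 0)"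

lemma diagT_carrier[simp]: "diagT n T \<in> carrier_mat n n" unfolding diagT_def by auto

lemma det_expand_rs:
  fixes M :: "'a::comm_ring_1 mat"
  assumes "finite T" "M \<in> carrier_mat n n" "T \<subseteq> {..<n}"
  shows "det (M + c \<cdot>\<^sub>m diagT n T) = (\<Sum>U\<in>Pow T. c ^ card U * det (rs M ({..<n} - U)))"
  using assms
proof (induction T arbitrary: M rule: finite_induct)
  case empty
  have "M + c \<cdot>\<^sub>m diagT n {} = M"
    by (rule eq_matI) (use empty in \<open>auto simp: diagT_def\<close>)
  thus ?case using rs_full[OF empty(1)] by simp
next
  case (insert t T)
  note M = insert.prems(1)
  have t: "t < n" and Tn: "T \<subseteq> {..<n}" using insert.prems(2) by auto
  define Y where "Y = M + c \<cdot>\<^sub>m diagT n T"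
  define M' where "M' = replace_row M t (unit_vec n t)"
  have Y: "Y \<in> carrier_mat n n" unfolding Y_def using M by auto
  have M': "M' \<in> carrier_mat n n" unfolding M'_def using M by auto
  have rY: "row Y t \<in> carrier_vec n" using Y by auto
  have X: "M + c \<cdot>\<^sub>m diagT n (insert t T) = replace_row Y t (row Y t + c \<cdot>\<^sub>v unit_vec n t)"
    by (rule eq_matI) (use M t insert.hyps(2) in \<open>auto simp: Y_def diagT_def\<close>)
  have Y2: "replace_row Y t (unit_vec n t) = M' + c \<cdot>\<^sub>m diagT n T"
    by (rule eq_matI) (use M t insert.hyps(2) in \<open>auto simp: Y_def M'_def diagT_def\<close>)
  have "det (M + c \<cdot>\<^sub>m diagT n (insert t T)) = det Y + c * det (M' + c \<cdot>\<^sub>m diagT n T)"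
    unfolding X det_replace_row_lin[OF Y t rY unit_vec_carrier] replace_row_self[OF Y] Y2 ..
  also have "det Y = (\<Sum>U\<in>Pow T. c ^ card U * det (rs M ({..<n} - U)))"
    unfolding Y_def by (rule insert.IH[OF M Tn])
  also have "det (M' + c \<cdot>\<^sub>m diagT n T) = (\<Sum>U\<in>Pow T. c ^ card U * det (rs M' ({..<n} - U)))"
    by (rule insert.IH[OF M' Tn])
  also have "\<dots> = (\<Sum>U\<in>Pow T. c ^ card U * det (rs M ({..<n} - insert t U)))"
  proof (rule sum.cong[OF refl])
    fix U assume U: "U \<in> Pow T"
    have "rs M' ({..<n} - U) = rs M ({..<n} - insert t U)"
      by (rule eq_matI) (use M U insert.hyps(2) t in \<open>auto simp: rs_def M'_def\<close>)
    thus "c ^ card U * det (rs M' ({..<n} - U)) = c ^ card U * det (rs M ({..<n} - insert t U))" by simp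
  qed
  also have "c * \<dots> = (\<Sum>U\<in>Pow T. c ^ card (insert t U) * det (rs M ({..<n} - insert t U)))"
  proof -
    have "c * (\<Sum>U\<in>Pow T. c ^ card U * det (rs M ({..<n} - insert t U)))
       = (\<Sum>U\<in>Pow T. c ^ Suc (card U) * det (rs M ({..<n} - insert t U)))"
      by (simp add: sum_distrib_left mult.assoc)
    also have "\<dots> = (\<Sum>U\<in>Pow T. c ^ card (insert t U) * det (rs M ({..<n} - insert t U)))"
    proof (rule sum.cong[OF refl])
      fix U assume "U \<in> Pow T"
      hence "card (insert t U) = Suc (card U)" using insert.hyps finite_subset by (metis PowD card_insert_disjoint subsetD)
      thus "c ^ Suc (card U) * det (rs M ({..<n} - insert t U)) = c ^ card (insert t U) * det (rs M ({..<n} - insert t U))" by simp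
    qed
    finally show ?thesis .
  qed
  also have "\<dots> = (\<Sum>U\<in>insert t ` Pow T. c ^ card U * det (rs M ({..<n} - U)))"
  proof -
    have "inj_on (insert t) (Pow T)" by (rule inj_onI) (metis PowD insert.hyps(2) insert_ident subsetD)
    thus ?thesis by (simp add: sum.reindex)
  qed
  also have "(\<Sum>U\<in>Pow T. c ^ card U * det (rs M ({..<n} - U))) + \<dots> =
      (\<Sum>U\<in>Pow (insert t T). c ^ card U * det (rs M ({..<n} - U)))"
    unfolding Pow_insert by (rule sum.union_disjoint[symmetric]) (use insert.hyps in auto)
  finally show ?case .
qed

definition Ecoef :: "'a::comm_ring_1 mat \<Rightarrow> nat set \<Rightarrow> nat \<Rightarrow> 'a" where
  "Ecoef M T j = (\<Sum>U\<in>{U. U \<subseteq> T \<and> card U = j}.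
      det (submatrix M ({..<dim_row M} - U) ({..<dim_row M} - U)))"

lemma det_expand:
  fixes M :: "'a::comm_ring_1 mat"
  assumes M: "M \<in> carrier_mat n n" and T: "T \<subseteq> {..<n}"
  shows "det (M + c \<cdot>\<^sub>m diagT n T) = (\<Sum>j\<le>n. c ^ j * Ecoef M T j)"
proof -
  have fT: "finite T" using T finite_subset by blast
  have "det (M + c \<cdot>\<^sub>m diagT n T) = (\<Sum>U\<in>Pow T. c ^ card U * det (submatrix M ({..<n} - U) ({..<n} - U)))"
    unfolding det_expand_rs[OF fT M T]
    by (rule sum.cong[OF refl]) (use M in \<open>auto simp: det_submatrix_rs\<close>)
  also have "\<dots> = (\<Sum>j\<le>n. \<Sum>U\<in>{U. U \<in> Pow T \<and> card U = j}. c ^ card U * det (submatrix M ({..<n} - U) ({..<n} - U)))"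
  proof (rule sum.group[symmetric])
    show "finite (Pow T)" using fT by simp
    show "finite {..n}" by simp
    show "card ` Pow T \<subseteq> {..n}"
    proof
      fix x assume "x \<in> card ` Pow T"
      then obtain U where "U \<subseteq> T" "x = card U" by auto
      hence "x \<le> card {..<n}" using T by (metis card_mono finite_lessThan subset_trans)
      thus "x \<in> {..n}" by simp
    qed
  qed
  also have "\<dots> = (\<Sum>j\<le>n. c ^ j * Ecoef M T j)"
  proof (rule sum.cong[OF refl])
    fix j assume "j \<in> {..n}"
    have "(\<Sum>U\<in>{U. U \<in> Pow T \<and> card U = j}. c ^ card U * det (submatrix M ({..<n} - U) ({..<n} - U)))
        = (\<Sum>U\<in>{U. U \<subseteq> T \<and> card U = j}. c ^ j * det (submatrix M ({..<n} - U) ({..<n} - U)))"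
      by (rule sum.cong) auto
    thus "(\<Sum>U\<in>{U. U \<in> Pow T \<and> card U = j}. c ^ card U * det (submatrix M ({..<n} - U) ({..<n} - U))) = c ^ j * Ecoef M T j"
      unfolding Ecoef_def using M by (simp add: sum_distrib_left)
  qed
  finally show ?thesis .
qed

lemma Ecoef_big:
  assumes "T \<subseteq> {..<n}" "j > n" shows "Ecoef M T j = 0"
proof -
  have e: "{U. U \<subseteq> T \<and> card U = j} = {}"
  proof (rule ccontr)
    assume "{U. U \<subseteq> T \<and> card U = j} \<noteq> {}"
    then obtain U where "U \<subseteq> T" "card U = j" by auto
    hence "card U \<le> n" using assms by (metis card_lessThan card_mono finite_lessThan subset_trans)
    thus False using assms \<open>card U = j\<close> by simp
  qed
  show ?thesis unfolding Ecoef_def e by simp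
qed

lemma index_sets_complement:
  fixes M :: "'a::comm_ring_1 mat"
  assumes M: "M \<in> carrier_mat n n" and r: "r \<le> n" and T: "T \<subseteq> {..<n}"
  shows "Ecoef M T (n - r) = (\<Sum>\<alpha>\<in>{\<alpha>\<in>index_sets r n. {..<n} - T \<subseteq> \<alpha>}. principal_minor M \<alpha>)"
  unfolding Ecoef_def principal_minor_def
proof (rule sum.reindex_bij_witness[of _ "\<lambda>\<alpha>. {..<n} - \<alpha>" "\<lambda>U. {..<n} - U"])
  fix U assume U: "U \<in> {U. U \<subseteq> T \<and> card U = n - r}"
  hence Un: "U \<subseteq> {..<n}" using T by auto
  show "{..<n} - ({..<n} - U) = U" using Un by auto
  have "card ({..<n} - U) = n - card U" using Un by (simp add: card_Diff_subset finite_subset)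
  thus "{..<n} - U \<in> {\<alpha> \<in> index_sets r n. {..<n} - T \<subseteq> \<alpha>}"
    using U r unfolding index_sets_def by auto
  show "det (submatrix M ({..<n} - U) ({..<n} - U)) = det (submatrix M ({..<dim_row M} - U) ({..<dim_row M} - U))"
    using M by simp
next
  fix \<alpha> assume a: "\<alpha> \<in> {\<alpha> \<in> index_sets r n. {..<n} - T \<subseteq> \<alpha>}"
  hence an: "\<alpha> \<subseteq> {..<n}" "card \<alpha> = r" unfolding index_sets_def by auto
  show "{..<n} - ({..<n} - \<alpha>) = \<alpha>" using an by auto
  have "card ({..<n} - \<alpha>) = n - r" using an by (simp add: card_Diff_subset finite_subset)
  thus "{..<n} - \<alpha> \<in> {U. U \<subseteq> T \<and> card U = n - r}" using a by auto
qed

lemma diagT_full: "diagT n {..<n} = 1\<^sub>m n"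
  by (rule eq_matI) (auto simp: diagT_def)

lemma poly_shift:
  fixes c :: "'a::comm_ring_1"
  shows "(\<Sum>j\<le>N. c ^ j * f j) * c ^ s = (\<Sum>i\<le>N + s. c ^ i * (if s \<le> i then f (i - s) else 0))"
proof (induction N)
  case 0
  have "(\<Sum>i\<le>s. c ^ i * (if s \<le> i then f (i - s) else 0)) = (\<Sum>i\<le>s. if i = s then c ^ s * f 0 else 0)"
    by (rule sum.cong) auto
  thus ?case by (simp add: mult.commute)
next
  case (Suc N)
  have "(\<Sum>j\<le>Suc N. c ^ j * f j) * c ^ s = (\<Sum>j\<le>N. c ^ j * f j) * c ^ s + c ^ (Suc N + s) * f (Suc N)"
    by (simp add: algebra_simps power_add)
  also have "\<dots> = (\<Sum>i\<le>Suc N + s. c ^ i * (if s \<le> i then f (i - s) else 0))"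
    unfolding Suc.IH by simp
  finally show ?case .
qed

lemma poly_extend:
  fixes c :: "'a::comm_ring_1"
  assumes "\<And>j. j > N \<Longrightarrow> f j = 0" and "N \<le> N'"
  shows "(\<Sum>j\<le>N. c ^ j * f j) = (\<Sum>j\<le>N'. c ^ j * f j)"
  by (rule sum.mono_neutral_left) (use assms in auto)

lemma det_pad_zero:
  fixes P Q :: "'a::field mat"
  assumes P: "P \<in> carrier_mat k p" and Q: "Q \<in> carrier_mat p k" and pk: "p < k"
  shows "det (P * Q) = 0"
proof -
  define P' where "P' = mat k k (\<lambda>(i,j). if j < p then P $$ (i,j) else 0)"
  define Q' where "Q' = mat k k (\<lambda>(i,j). if i < p then Q $$ (i,j) else 0)"
  have P': "P' \<in> carrier_mat k k" and Q': "Q' \<in> carrier_mat k k" unfolding P'_def Q'_def by auto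
  have eq: "P' * Q' = P * Q"
  proof (rule eq_matI)
    fix i j assume "i < dim_row (P * Q)" "j < dim_col (P * Q)"
    hence i: "i < k" and j: "j < k" using P Q by auto
    have "(P' * Q') $$ (i,j) = (\<Sum>l\<in>{0..<k}. if l < p then P $$ (i,l) * Q $$ (l,j) else 0)"
      using i j pk unfolding P'_def Q'_def by (auto simp: scalar_prod_def intro!: sum.cong)
    also have "\<dots> = (\<Sum>l\<in>{0..<k} \<inter> {l. l < p}. P $$ (i,l) * Q $$ (l,j))"
      by (simp add: sum.inter_restrict)
    also have "{0..<k} \<inter> {l. l < p} = {0..<p}" using pk by auto
    also have "(\<Sum>l\<in>{0..<p}. P $$ (i,l) * Q $$ (l,j)) = (P * Q) $$ (i,j)"
      using P Q i j by (auto simp: scalar_prod_def)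
    finally show "(P' * Q') $$ (i, j) = (P * Q) $$ (i, j)" .
  qed (use P Q P' Q' in auto)
  have "det P' = 0"
  proof -
    have e: "unit_vec k (k - 1) \<in> carrier_vec k" "unit_vec k (k - 1) \<noteq> 0\<^sub>v k"
      using pk by (auto simp: unit_vec_def zero_vec_def vec_eq_iff)
    have "P' *\<^sub>v unit_vec k (k - 1) = 0\<^sub>v k"
      by (rule eq_vecI) (use pk in \<open>auto simp: P'_def scalar_prod_right_unit\<close>)
    thus ?thesis using det_0_iff_vec_prod_zero_field[OF P'] e by blast
  qed
  thus ?thesis using eq det_mult[OF P' Q'] by simp
qed

lemma submatrix_mult:
  fixes P Q :: "'a::comm_ring_1 mat"
  assumes P: "P \<in> carrier_mat m p" and Q: "Q \<in> carrier_mat p m" and S: "S \<subseteq> {..<m}"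
  shows "submatrix (P * Q) S S = submatrix P S UNIV * submatrix Q UNIV S"
proof -
  have cS: "card {i. i < m \<and> i \<in> S} = card S"
    using S by (metis (no_types, lifting) Collect_cong lessThan_iff subsetD Collect_mem_eq)
  have cU: "card {j. j < p \<and> j \<in> (UNIV::nat set)} = p" by simp
  show ?thesis
  proof (rule eq_matI)
    show "dim_row (submatrix (P * Q) S S) = dim_row (submatrix P S UNIV * submatrix Q UNIV S)"
      using P Q by (simp add: dim_submatrix)
    show "dim_col (submatrix (P * Q) S S) = dim_col (submatrix P S UNIV * submatrix Q UNIV S)"
      using P Q by (simp add: dim_submatrix)
    fix a b assume a: "a < dim_row (submatrix P S UNIV * submatrix Q UNIV S)"
      and b: "b < dim_col (submatrix P S UNIV * submatrix Q UNIV S)"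
    hence a': "a < card S" and b': "b < card S" using P Q cS by (auto simp: dim_submatrix)
    have pa: "pick S a < m" "pick S b < m" using pick_in_set_le[OF a'] pick_in_set_le[OF b'] S by auto
    have "submatrix (P * Q) S S $$ (a,b) = (P * Q) $$ (pick S a, pick S b)"
      by (rule submatrix_index) (use P Q cS a' b' in auto)
    also have "\<dots> = (\<Sum>l\<in>{0..<p}. P $$ (pick S a, l) * Q $$ (l, pick S b))"
      using P Q pa by (auto simp: scalar_prod_def)
    also have "\<dots> = (submatrix P S UNIV * submatrix Q UNIV S) $$ (a,b)"
      using P Q a' b' cS cU by (auto simp: scalar_prod_def submatrix_index dim_submatrix pick_UNIV intro!: sum.cong)
    finally show "submatrix (P * Q) S S $$ (a, b) = (submatrix P S UNIV * submatrix Q UNIV S) $$ (a, b)" .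
  qed
qed

lemma principal_minor_low_rank:
  fixes P Q :: "'a::field mat"
  assumes P: "P \<in> carrier_mat m p" and Q: "Q \<in> carrier_mat p m" and S: "S \<subseteq> {..<m}"
    and c: "card S > p"
  shows "principal_minor (P * Q) S = 0"
proof -
  have cS: "card {i. i < m \<and> i \<in> S} = card S"
    using S by (metis (no_types, lifting) Collect_cong lessThan_iff subsetD Collect_mem_eq)
  have "submatrix P S UNIV \<in> carrier_mat (card S) p" using P cS by (auto simp: dim_submatrix)
  moreover have "submatrix Q UNIV S \<in> carrier_mat p (card S)" using Q cS by (auto simp: dim_submatrix)
  ultimately show ?thesis
    unfolding principal_minor_def submatrix_mult[OF P Q S] using det_pad_zero c by blast
qed

lemma replace_row_mult:
  fixes P Q R :: "'a::comm_ring_1 mat"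
  assumes P: "P \<in> carrier_mat m p" and Q: "Q \<in> carrier_mat p q" and R: "R \<in> carrier_mat 1 p"
  shows "replace_row (P * Q) i (row (R * Q) 0) = replace_row P i (row R 0) * Q"
proof (rule eq_matI)
  fix k l assume "k < dim_row (replace_row P i (row R 0) * Q)" "l < dim_col (replace_row P i (row R 0) * Q)"
  hence k: "k < m" and l: "l < q" using P Q by auto
  have rw: "row (replace_row P i (row R 0)) k = (if k = i then row R 0 else row P k)"
    by (rule eq_vecI) (use P R k in auto)
  show "replace_row (P * Q) i (row (R * Q) 0) $$ (k, l) = (replace_row P i (row R 0) * Q) $$ (k, l)"
    using P Q R k l rw by auto
qed (use P Q in auto)

lemma sylvester:
  fixes F K :: "'a::idom mat"
  assumes F: "F \<in> carrier_mat m r" and K: "K \<in> carrier_mat r m"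
  shows "c ^ r * det (F * K + c \<cdot>\<^sub>m 1\<^sub>m m) = c ^ m * det (K * F + c \<cdot>\<^sub>m 1\<^sub>m r)"
proof -
  define M1 where "M1 = four_block_mat (c \<cdot>\<^sub>m 1\<^sub>m m) (- F) K (1\<^sub>m r)"
  define L1 where "L1 = four_block_mat (1\<^sub>m m) F (0\<^sub>m r m) (1\<^sub>m r)"
  define L2 where "L2 = four_block_mat (1\<^sub>m m) (0\<^sub>m m r) (- K) (c \<cdot>\<^sub>m 1\<^sub>m r)"
  have M1: "M1 \<in> carrier_mat (m + r) (m + r)" unfolding M1_def using F K by auto
  have L1: "L1 \<in> carrier_mat (m + r) (m + r)" unfolding L1_def using F K by auto
  have L2: "L2 \<in> carrier_mat (m + r) (m + r)" unfolding L2_def using F K by auto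
  have FK: "F * K \<in> carrier_mat m m" and KF: "K * F \<in> carrier_mat r r" using F K by auto
  have e1: "L1 * M1 = four_block_mat (F * K + c \<cdot>\<^sub>m 1\<^sub>m m) (0\<^sub>m m r) K (1\<^sub>m r)"
  proof -
    have "L1 * M1 = four_block_mat (1\<^sub>m m * (c \<cdot>\<^sub>m 1\<^sub>m m) + F * K) (1\<^sub>m m * (- F) + F * 1\<^sub>m r)
        (0\<^sub>m r m * (c \<cdot>\<^sub>m 1\<^sub>m m) + 1\<^sub>m r * K) (0\<^sub>m r m * (- F) + 1\<^sub>m r * 1\<^sub>m r)"
      unfolding L1_def M1_def by (rule mult_four_block_mat) (use F K in auto)
    also have "1\<^sub>m m * (c \<cdot>\<^sub>m 1\<^sub>m m) + F * K = F * K + c \<cdot>\<^sub>m 1\<^sub>m m"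
      using FK by (simp add: comm_add_mat[of _ m m])
    also have "1\<^sub>m m * (- F) + F * 1\<^sub>m r = 0\<^sub>m m r" using F by simp
    also have "0\<^sub>m r m * (c \<cdot>\<^sub>m 1\<^sub>m m) + 1\<^sub>m r * K = K" using K by simp
    also have "0\<^sub>m r m * (- F) + 1\<^sub>m r * 1\<^sub>m r = 1\<^sub>m r"
    proof -
      have z: "- (0\<^sub>m r r :: 'a mat) = 0\<^sub>m r r" by (rule eq_matI) auto
      show ?thesis using F by (simp add: z)
    qed
    finally show ?thesis .
  qed
  have e2: "L2 * M1 = four_block_mat (c \<cdot>\<^sub>m 1\<^sub>m m) (- F) (0\<^sub>m r m) (K * F + c \<cdot>\<^sub>m 1\<^sub>m r)"
  proof -
    have "L2 * M1 = four_block_mat (1\<^sub>m m * (c \<cdot>\<^sub>m 1\<^sub>m m) + 0\<^sub>m m r * K) (1\<^sub>m m * (- F) + 0\<^sub>m m r * 1\<^sub>m r)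
        ((- K) * (c \<cdot>\<^sub>m 1\<^sub>m m) + (c \<cdot>\<^sub>m 1\<^sub>m r) * K) ((- K) * (- F) + (c \<cdot>\<^sub>m 1\<^sub>m r) * 1\<^sub>m r)"
      unfolding L2_def M1_def by (rule mult_four_block_mat) (use F K in auto)
    also have "1\<^sub>m m * (c \<cdot>\<^sub>m 1\<^sub>m m) + 0\<^sub>m m r * K = c \<cdot>\<^sub>m 1\<^sub>m m" using K by simp
    also have "1\<^sub>m m * (- F) + 0\<^sub>m m r * 1\<^sub>m r = - F" using F by simp
    also have "(- K) * (c \<cdot>\<^sub>m 1\<^sub>m m) + (c \<cdot>\<^sub>m 1\<^sub>m r) * K = 0\<^sub>m r m"
    proof -
      have "(- K) * (c \<cdot>\<^sub>m 1\<^sub>m m) = c \<cdot>\<^sub>m (- K)"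
        using K by (simp add: mult_smult_distrib[of _ r m _ m])
      also have "\<dots> = - (c \<cdot>\<^sub>m K)" by (rule eq_matI) (use K in auto)
      finally have "(- K) * (c \<cdot>\<^sub>m 1\<^sub>m m) = - (c \<cdot>\<^sub>m K)" .
      moreover have "(c \<cdot>\<^sub>m 1\<^sub>m r) * K = c \<cdot>\<^sub>m K"
        using K by (simp add: mult_smult_assoc_mat[of _ r r _ m])
      ultimately show ?thesis using K by simp
    qed
    also have "(- K) * (- F) + (c \<cdot>\<^sub>m 1\<^sub>m r) * 1\<^sub>m r = K * F + c \<cdot>\<^sub>m 1\<^sub>m r"
    proof -
      have "(- K) * (- F) = K * F" by (rule eq_matI) (use F K in auto)
      thus ?thesis by simp
    qed
    finally show ?thesis .
  qed
  have d1: "det (L1 * M1) = det (F * K + c \<cdot>\<^sub>m 1\<^sub>m m)"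
    unfolding e1 by (subst det_four_block_mat_upper_right_zero[of _ m _ r]) (use FK K in auto)
  have dL1: "det L1 = 1"
    unfolding L1_def by (subst det_four_block_mat_lower_left_zero[of _ m _ r]) (use F in auto)
  have d2: "det (L2 * M1) = c ^ m * det (K * F + c \<cdot>\<^sub>m 1\<^sub>m r)"
    unfolding e2 by (subst det_four_block_mat_lower_left_zero[of _ m _ r]) (use F KF in auto)
  have dL2: "det L2 = c ^ r"
    unfolding L2_def by (subst det_four_block_mat_upper_right_zero[of _ m _ r]) (use K in auto)
  have "det M1 = det (F * K + c \<cdot>\<^sub>m 1\<^sub>m m)" using d1 dL1 det_mult[OF L1 M1] by simp
  moreover have "c ^ r * det M1 = c ^ m * det (K * F + c \<cdot>\<^sub>m 1\<^sub>m r)" using d2 dL2 det_mult[OF L2 M1] by simp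
  ultimately show ?thesis by simp
qed

lemma coeff_eq:
  fixes f h :: "nat \<Rightarrow> complex"
  assumes "\<And>c. (\<Sum>j\<le>N. c ^ j * f j) = (\<Sum>j\<le>N. c ^ j * h j)" and "k \<le> N"
  shows "f k = h k"
proof -
  have "\<forall>x. (\<Sum>j\<le>N. f j * x ^ j) = (\<Sum>j\<le>N. h j * x ^ j)"
    using assms(1) by (simp add: mult.commute)
  thus ?thesis using polyfun_eq_coeffs[of f N h] assms(2) by blast
qed

lemma main_lemma:
  fixes A :: "complex mat" and y :: "complex vec"
  assumes A: "A \<in> carrier_mat m n" and y: "y \<in> carrier_vec n"
  defines "x0 \<equiv> row (mat_of_rows n [y] * mp_inverse A) 0"
    and "g \<equiv> row (mat_of_rows n [y] * cadj A) 0"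
  shows "crank A \<le> m \<and> dr (crank A) (A * cadj A) \<noteq> 0 \<and>
    (\<forall>i<m. x0 $ i * dr (crank A) (A * cadj A) =
       (\<Sum>\<alpha>\<in>{\<alpha>\<in>index_sets (crank A) m. i \<in> \<alpha>}. principal_minor (replace_row (A * cadj A) i g) \<alpha>))"
proof -
  define r where "r = crank A"
  obtain F G where F: "F \<in> carrier_mat m r" and G: "G \<in> carrier_mat r n" and AFG: "A = F * G"
    and dF: "det (cadj F * F) \<noteq> 0" and dG: "det (G * cadj G) \<noteq> 0" and rm: "r \<le> m"
    using rank_factorization[OF A] unfolding r_def by blast
  note dims = carrier_matD[OF A] carrier_matD[OF F] carrier_matD[OF G]
  define H where "H = G * cadj G"
  define N where "N = cadj F * F"
  have H: "H \<in> carrier_mat r r" and N: "N \<in> carrier_mat r r" unfolding H_def N_def using F G by auto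
  have hH: "cadj H = H" unfolding H_def using dims by (simp add: cadj_mult')
  have hN: "cadj N = N" unfolding N_def using dims by (simp add: cadj_mult')
  obtain P where P: "P \<in> carrier_mat r r" "H * P = 1\<^sub>m r" "P * H = 1\<^sub>m r"
    using inverse_exists[OF H dG[folded H_def]] by blast
  obtain Q where Q: "Q \<in> carrier_mat r r" "N * Q = 1\<^sub>m r" "Q * N = 1\<^sub>m r"
    using inverse_exists[OF N dF[folded N_def]] by blast
  have hP: "cadj P = P" using herm_inverse[OF H hH P] .
  have hQ: "cadj Q = Q" using herm_inverse[OF N hN Q] .
  note dims2 = dims carrier_matD[OF P(1)] carrier_matD[OF Q(1)] carrier_matD[OF H] carrier_matD[OF N]
  have X: "mp_inverse A = cadj G * (P * (Q * cadj F))"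
    by (rule mp_factor[OF A F G AFG]) (use P Q hP hQ in \<open>auto simp: H_def N_def\<close>)
  define Y where "Y = mat_of_rows n [y]"
  have Y: "Y \<in> carrier_mat 1 n" unfolding Y_def using y by auto
  define K where "K = H * cadj F"
  have K: "K \<in> carrier_mat r m" unfolding K_def using H F by auto
  define B where "B = A * cadj A"
  have B: "B \<in> carrier_mat m m" unfolding B_def using A by auto
  have BFK: "B = F * K" unfolding B_def K_def H_def AFG using dims by (simp add: cadj_mult' massoc)
  have BFH: "B = (F * H) * cadj F" unfolding BFK K_def using dims2 by (simp add: massoc)
  define U0 where "U0 = Y * cadj G * P * Q"
  have U0: "U0 \<in> carrier_mat 1 r" unfolding U0_def
    using mult_carrier_mat[OF mult_carrier_mat[OF mult_carrier_mat[OF Y cadj_carrier[OF G]] P(1)] Q(1)] .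
  have YX: "Y * mp_inverse A = U0 * cadj F" unfolding X U0_def using dims2 Y by (simp add: massoc)
  have x0: "x0 = row (U0 * cadj F) 0" unfolding x0_def Y_def[symmetric] YX by (rule refl)
  have x0c: "x0 \<in> carrier_vec m" unfolding x0 carrier_vec_def using F by simp
  have P2: "P * (G * (cadj G * Z)) = Z" if "dim_row Z = r" for Z
  proof -
    have "P * (G * (cadj G * Z)) = (P * H) * Z" unfolding H_def using dims2 that by (simp add: massoc)
    thus ?thesis using P that by (simp add: one_l)
  qed
  have Q2: "Q * (cadj F * (F * Z)) = Z" if "dim_row Z = r" for Z
  proof -
    have "Q * (cadj F * (F * Z)) = (Q * N) * Z" unfolding N_def using dims2 that by (simp add: massoc)
    thus ?thesis using Q that by (simp add: one_l)
  qed
  have XB: "mp_inverse A * B = cadj A"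
    unfolding X unfolding BFK K_def H_def AFG using dims2 by (simp add: massoc Q2 P2 cadj_mult')
  have YcA: "Y * cadj A = (Y * mp_inverse A) * B"
    unfolding XB[symmetric] using dims2 Y B X by (simp add: massoc)
  have g: "g = transpose_mat B *\<^sub>v x0"
  proof (rule eq_vecI)
    fix l assume "l < dim_vec (transpose_mat B *\<^sub>v x0)"
    hence l: "l < m" using B by simp
    have "g $ l = (Y * cadj A) $$ (0, l)" unfolding g_def Y_def[symmetric] using Y A l by simp
    also have "\<dots> = row (Y * mp_inverse A) 0 \<bullet> col B l" unfolding YcA using Y B l X dims2 by simp
    also have "\<dots> = col B l \<bullet> x0" unfolding x0_def Y_def[symmetric]
      by (rule comm_scalar_prod[of _ m]) (use x0c[unfolded x0_def Y_def[symmetric]] B l in auto)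
    also have "\<dots> = (transpose_mat B *\<^sub>v x0) $ l" using B l by simp
    finally show "g $ l = (transpose_mat B *\<^sub>v x0) $ l" .
  qed (use g_def A B in auto)
  have gc: "g \<in> carrier_vec m" using g B x0c by auto
  \<comment> \<open>determinant of the perturbed matrix: d_r \<noteq> 0\<close>
  define EB where "EB = Ecoef B {..<m}"
  define EK where "EK = Ecoef (K * F) {..<r}"
  have KF: "K * F \<in> carrier_mat r r" using K F by auto
  have EB0: "EB j = 0" if "j > m" for j unfolding EB_def by (rule Ecoef_big[OF _ that]) auto
  have EK0: "EK j = 0" if "j > r" for j unfolding EK_def by (rule Ecoef_big[OF _ that]) auto
  have detB: "det (B + c \<cdot>\<^sub>m 1\<^sub>m m) = (\<Sum>j\<le>m. c ^ j * EB j)" for c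
    using det_expand[OF B, of "{..<m}" c] unfolding EB_def diagT_full by simp
  have detKF: "det (K * F + c \<cdot>\<^sub>m 1\<^sub>m r) = (\<Sum>j\<le>r. c ^ j * EK j)" for c
    using det_expand[OF KF, of "{..<r}" c] unfolding EK_def diagT_full by simp
  have syl: "(\<Sum>i\<le>m + r. c ^ i * (if r \<le> i then EB (i - r) else 0))
      = (\<Sum>i\<le>m + r. c ^ i * (if m \<le> i then EK (i - m) else 0))" for c
  proof -
    have "(\<Sum>i\<le>m + r. c ^ i * (if r \<le> i then EB (i - r) else 0)) = (\<Sum>j\<le>m. c ^ j * EB j) * c ^ r"
      by (rule poly_shift[symmetric])
    also have "\<dots> = c ^ r * det (F * K + c \<cdot>\<^sub>m 1\<^sub>m m)" using detB BFK by (simp add: mult.commute)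
    also have "\<dots> = c ^ m * det (K * F + c \<cdot>\<^sub>m 1\<^sub>m r)" by (rule sylvester[OF F K])
    also have "\<dots> = (\<Sum>j\<le>r. c ^ j * EK j) * c ^ m" using detKF by (simp add: mult.commute)
    also have "\<dots> = (\<Sum>i\<le>r + m. c ^ i * (if m \<le> i then EK (i - m) else 0))"
      by (rule poly_shift)
    finally show ?thesis by (simp add: add.commute)
  qed
  have "(if r \<le> m then EB (m - r) else 0) = (if m \<le> m then EK (m - m) else 0)"
    by (rule coeff_eq[OF syl]) simp
  hence EBK: "EB (m - r) = EK 0" using rm by simp
  have "EK 0 = det (K * F)"
  proof -
    have "{U. U \<subseteq> {..<r} \<and> card U = 0} = {{}}" by (auto simp: card_eq_0_iff finite_subset)
    thus ?thesis unfolding EK_def Ecoef_def using KF submatrix_full[OF KF] carrier_matD[OF K] by simp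
  qed
  also have "K * F = H * N" unfolding K_def N_def using dims2 by (simp add: massoc)
  also have "det (H * N) = det H * det N" by (rule det_mult[OF H N])
  finally have "EK 0 \<noteq> 0" using dF dG unfolding H_def N_def by simp
  hence EBne: "EB (m - r) \<noteq> 0" using EBK by simp
  have EBdr: "EB (m - r) = dr r B"
  proof -
    have "EB (m - r) = (\<Sum>\<alpha>\<in>{\<alpha>\<in>index_sets r m. {..<m} - {..<m} \<subseteq> \<alpha>}. principal_minor B \<alpha>)"
      unfolding EB_def by (rule index_sets_complement[OF B rm]) simp
    also have "\<dots> = dr r B" unfolding dr_def using B by simp
    finally show ?thesis .
  qed
  have drne: "dr r B \<noteq> 0" using EBne EBdr by simp
  have ident: "x0 $ i * dr r B = (\<Sum>\<alpha>\<in>{\<alpha>\<in>index_sets r m. i \<in> \<alpha>}. principal_minor (replace_row B i g) \<alpha>)"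
    if i: "i < m" for i
  proof -
    define T where "T = {..<m} - {i}"
    have Tm: "T \<subseteq> {..<m}" unfolding T_def by auto
    define Mg where "Mg = replace_row B i g"
    define Mx where "Mx = replace_row B i x0"
    have Mg: "Mg \<in> carrier_mat m m" and Mx: "Mx \<in> carrier_mat m m" unfolding Mg_def Mx_def using B by auto
    define Eg where "Eg = Ecoef Mg T"
    define Ex where "Ex = Ecoef Mx T"
    have Eg0: "Eg j = 0" if "j > m" for j unfolding Eg_def by (rule Ecoef_big[OF Tm that])
    have Ex0: "Ex j = 0" if "j > m" for j unfolding Ex_def by (rule Ecoef_big[OF Tm that])
    have poly: "(\<Sum>j\<le>m + 1. c ^ j * (Eg j + (if 1 \<le> j then Ex (j - 1) else 0)))
        = (\<Sum>j\<le>m + 1. c ^ j * (x0 $ i * EB j))" for c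
    proof -
      define Bc where "Bc = B + c \<cdot>\<^sub>m 1\<^sub>m m"
      have Bc: "Bc \<in> carrier_mat m m" unfolding Bc_def using B by auto
      have tBc: "transpose_mat Bc *\<^sub>v x0 = g + c \<cdot>\<^sub>v x0"
      proof (rule eq_vecI)
        fix l assume "l < dim_vec (g + c \<cdot>\<^sub>v x0)"
        hence l: "l < m" using gc x0c by simp
        have "(transpose_mat Bc *\<^sub>v x0) $ l = col Bc l \<bullet> x0" using Bc l by simp
        also have "col Bc l = col B l + c \<cdot>\<^sub>v unit_vec m l"
          unfolding Bc_def by (rule eq_vecI) (use B l in auto)
        also have "(col B l + c \<cdot>\<^sub>v unit_vec m l) \<bullet> x0 = col B l \<bullet> x0 + c * (unit_vec m l \<bullet> x0)"
          using B l x0c by (simp add: add_scalar_prod_distrib[of _ m] smult_scalar_prod_distrib[of _ m])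
        also have "unit_vec m l \<bullet> x0 = x0 $ l" using x0c l by simp
        also have "col B l \<bullet> x0 = g $ l" unfolding g using B l by simp
        finally show "(transpose_mat Bc *\<^sub>v x0) $ l = (g + c \<cdot>\<^sub>v x0) $ l" using gc x0c l by simp
      qed (use Bc gc x0c in auto)
      have r1: "replace_row Bc i g = Mg + c \<cdot>\<^sub>m diagT m T"
        by (rule eq_matI) (use B i in \<open>auto simp: Bc_def Mg_def T_def diagT_def\<close>)
      have r2: "replace_row Bc i x0 = Mx + c \<cdot>\<^sub>m diagT m T"
        by (rule eq_matI) (use B i in \<open>auto simp: Bc_def Mx_def T_def diagT_def\<close>)
      have "det (replace_row Bc i g) + c * det (replace_row Bc i x0) = x0 $ i * det Bc"
        using det_replace_row_lin[OF Bc i gc x0c, of c] det_replace_row_comb[OF Bc i x0c] tBc by simp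
      hence eq: "(\<Sum>j\<le>m. c ^ j * Eg j) + c * (\<Sum>j\<le>m. c ^ j * Ex j) = x0 $ i * (\<Sum>j\<le>m. c ^ j * EB j)"
        unfolding r1 r2 unfolding det_expand[OF Mg Tm] det_expand[OF Mx Tm] Bc_def detB Eg_def Ex_def by simp
      have s1: "(\<Sum>j\<le>m. c ^ j * Eg j) = (\<Sum>j\<le>m + 1. c ^ j * Eg j)"
        by (rule poly_extend) (use Eg0 in auto)
      have s2: "c * (\<Sum>j\<le>m. c ^ j * Ex j) = (\<Sum>j\<le>m + 1. c ^ j * (if 1 \<le> j then Ex (j - 1) else 0))"
        using poly_shift[where c=c and N=m and f=Ex and s=1] by (simp add: mult.commute)
      have s3: "x0 $ i * (\<Sum>j\<le>m. c ^ j * EB j) = (\<Sum>j\<le>m + 1. c ^ j * (x0 $ i * EB j))"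
      proof -
        have "x0 $ i * (\<Sum>j\<le>m. c ^ j * EB j) = (\<Sum>j\<le>m. c ^ j * (x0 $ i * EB j))"
          by (simp add: sum_distrib_left mult_ac)
        also have "\<dots> = (\<Sum>j\<le>m + 1. c ^ j * (x0 $ i * EB j))"
          by (rule poly_extend) (use EB0 in auto)
        finally show ?thesis .
      qed
      have "(\<Sum>j\<le>m + 1. c ^ j * (Eg j + (if 1 \<le> j then Ex (j - 1) else 0)))
          = (\<Sum>j\<le>m + 1. c ^ j * Eg j) + (\<Sum>j\<le>m + 1. c ^ j * (if 1 \<le> j then Ex (j - 1) else 0))"
        by (simp only: distrib_left sum.distrib)
      also have "\<dots> = (\<Sum>j\<le>m. c ^ j * Eg j) + c * (\<Sum>j\<le>m. c ^ j * Ex j)" by (simp only: s1 s2)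
      also have "\<dots> = x0 $ i * (\<Sum>j\<le>m. c ^ j * EB j)" by (rule eq)
      also have "\<dots> = (\<Sum>j\<le>m + 1. c ^ j * (x0 $ i * EB j))" by (rule s3)
      finally show ?thesis .
    qed
    have co: "Eg (m - r) + (if 1 \<le> m - r then Ex (m - r - 1) else 0) = x0 $ i * EB (m - r)"
      by (rule coeff_eq[OF poly]) simp
    have Exz: "Ex (m - r - 1) = 0" if "1 \<le> m - r"
    proof -
      have "Ex (m - r - 1) = (\<Sum>U\<in>{U. U \<subseteq> T \<and> card U = m - r - 1}. 0)"
        unfolding Ex_def Ecoef_def
      proof (rule sum.cong[OF refl])
        fix U assume U: "U \<in> {U. U \<subseteq> T \<and> card U = m - r - 1}"
        have Um: "U \<subseteq> {..<m}" using U Tm by auto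
        have fU: "finite U" using finite_subset[OF Um] by simp
        have "card ({..<m} - U) = card {..<m} - card U" by (rule card_Diff_subset[OF fU Um])
        hence cS: "card ({..<m} - U) = r + 1" using U that rm by simp
        have MxE: "Mx = replace_row (F * H) i (row U0 0) * cadj F"
        proof -
          have "Mx = replace_row (F * H * cadj F) i (row (U0 * cadj F) 0)"
            unfolding Mx_def by (simp only: BFH x0)
          also have "\<dots> = replace_row (F * H) i (row U0 0) * cadj F"
            by (rule replace_row_mult[OF mult_carrier_mat[OF F H] cadj_carrier[OF F] U0])
          finally show ?thesis .
        qed
        have RC: "replace_row (F * H) i (row U0 0) \<in> carrier_mat m r"
          by (rule carrier_matI) (use carrier_matD[OF F] carrier_matD[OF H] in simp_all)
        have "principal_minor Mx ({..<m} - U) = 0"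
          unfolding MxE by (rule principal_minor_low_rank[OF RC cadj_carrier[OF F]]) (use cS in auto)
        thus "det (submatrix Mx ({..<dim_row Mx} - U) ({..<dim_row Mx} - U)) = 0"
          unfolding principal_minor_def using Mx by simp
      qed
      thus ?thesis by simp
    qed
    have Egv: "Eg (m - r) = (\<Sum>\<alpha>\<in>{\<alpha>\<in>index_sets r m. i \<in> \<alpha>}. principal_minor Mg \<alpha>)"
    proof -
      have "Eg (m - r) = (\<Sum>\<alpha>\<in>{\<alpha>\<in>index_sets r m. {..<m} - T \<subseteq> \<alpha>}. principal_minor Mg \<alpha>)"
        unfolding Eg_def by (rule index_sets_complement[OF Mg rm Tm])
      also have "{..<m} - T = {i}" unfolding T_def using i by auto
      finally show ?thesis by simp
    qed
    have "Eg (m - r) = x0 $ i * EB (m - r)" using co Exz by (cases "1 \<le> m - r") auto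
    thus ?thesis using Egv EBdr unfolding Mg_def by (simp add: mult.commute)
  qed
  show ?thesis using rm drne ident unfolding r_def B_def by blast
qed

theorem theorem3p3:
  fixes A :: "complex mat" and y :: "complex vec" and m n r :: nat
  assumes A: "A \<in> carrier_mat m n"
    and y: "y \<in> carrier_vec n"
  defines "x0 \<equiv> row (mat_of_rows n [y] * mp_inverse A) 0"
    and "g \<equiv> row (mat_of_rows n [y] * cadj A) 0"
  shows "(crank A = m \<longrightarrow>
           (\<forall>i<m. x0 $ i = det (replace_row (A * cadj A) i g) / det (A * cadj A)))
       \<and> (crank A = r \<and> r \<le> n \<and> n < m \<longrightarrow>
           (\<forall>i<m. x0 $ i =
              (\<Sum>\<alpha>\<in>{\<alpha>\<in>index_sets r m. i \<in> \<alpha>}.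
                   principal_minor (replace_row (A * cadj A) i g) \<alpha>)
              / dr r (A * cadj A)))"
proof -
  have MLm: "crank A \<le> m \<and> dr (crank A) (A * cadj A) \<noteq> 0 \<and>
    (\<forall>i<m. x0 $ i * dr (crank A) (A * cadj A) =
       (\<Sum>\<alpha>\<in>{\<alpha>\<in>index_sets (crank A) m. i \<in> \<alpha>}. principal_minor (replace_row (A * cadj A) i g) \<alpha>))"
    unfolding x0_def g_def by (rule main_lemma[OF A y])
  have B: "A * cadj A \<in> carrier_mat m m" using A by auto
  show ?thesis
  proof (intro conjI impI allI)
    fix i assume cr: "crank A = m" and i: "i < m"
    have IS: "{\<alpha>\<in>index_sets m m. i \<in> \<alpha>} = {{..<m}}"
    proof
      show "{\<alpha>\<in>index_sets m m. i \<in> \<alpha>} \<subseteq> {{..<m}}"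
      proof
        fix \<alpha> assume "\<alpha> \<in> {\<alpha>\<in>index_sets m m. i \<in> \<alpha>}"
        hence "\<alpha> \<subseteq> {..<m}" "card \<alpha> = m" unfolding index_sets_def by auto
        hence "\<alpha> = {..<m}" by (intro card_subset_eq) auto
        thus "\<alpha> \<in> {{..<m}}" by simp
      qed
      show "{{..<m}} \<subseteq> {\<alpha>\<in>index_sets m m. i \<in> \<alpha>}" using i unfolding index_sets_def by auto
    qed
    have IS2: "index_sets m m = {{..<m}}"
    proof
      show "index_sets m m \<subseteq> {{..<m}}"
      proof
        fix \<alpha> assume "\<alpha> \<in> index_sets m m"
        hence "\<alpha> \<subseteq> {..<m}" "card \<alpha> = m" unfolding index_sets_def by auto
        hence "\<alpha> = {..<m}" by (intro card_subset_eq) auto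
        thus "\<alpha> \<in> {{..<m}}" by simp
      qed
      show "{{..<m}} \<subseteq> index_sets m m" unfolding index_sets_def by auto
    qed
    have Mg: "replace_row (A * cadj A) i g \<in> carrier_mat m m" using B by simp
    have dB: "dr m (A * cadj A) = det (A * cadj A)"
      unfolding dr_def principal_minor_def using A B IS2 submatrix_full[OF B] by simp
    have "x0 $ i * det (A * cadj A) = det (replace_row (A * cadj A) i g)"
      using MLm cr i IS dB submatrix_full[OF Mg] unfolding principal_minor_def by simp
    moreover have "det (A * cadj A) \<noteq> 0" using MLm cr dB by simp
    ultimately show "x0 $ i = det (replace_row (A * cadj A) i g) / det (A * cadj A)"
      by (simp add: eq_divide_eq)
  next
    fix i assume h: "crank A = r \<and> r \<le> n \<and> n < m" and i: "i < m"
    have "x0 $ i * dr r (A * cadj A) =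
       (\<Sum>\<alpha>\<in>{\<alpha>\<in>index_sets r m. i \<in> \<alpha>}. principal_minor (replace_row (A * cadj A) i g) \<alpha>)"
      using MLm h i by simp
    moreover have "dr r (A * cadj A) \<noteq> 0" using MLm h by simp
    ultimately show "x0 $ i = (\<Sum>\<alpha>\<in>{\<alpha>\<in>index_sets r m. i \<in> \<alpha>}.
                   principal_minor (replace_row (A * cadj A) i g) \<alpha>) / dr r (A * cadj A)"
      by (simp add: eq_divide_eq)
  qed
qed

end
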